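(* Let $P$ be a finite connected ranked poset with maximum rank $r$, and let $\sigma$ be any permutation of $\{0,1,\ldots,r\}$. Let $\mathcal{O}$ be an orbit of $\Phi_{\mathrm{row}(\sigma)}$ acting on $J(P)$. Then the distribution on $J(P)$ that is uniform on $\mathcal{O}$ and zero outside $\mathcal{O}$ is toggle-symmetric.
   Context: $P$ is ranked with rank function $\mathrm{rk}\colon P\to\mathbb{N}$ ($0$ in the image, $\mathrm{rk}(q)=\mathrm{rk}(p)+1$ when $q$ covers $p$). $J(P)$ is the set of order ideals of $P$. For $p\in P$, the toggle $\tau_p\colon J(P)\to J(P)$ sends $I$ to $I\cup\{p\}$ if $p\notin I$ and $p$ is minimal in $P\setminus I$, to $I\setminus\{p\}$ if $p\in I$ and $p$ is maximal in $I$, and to $I$ otherwise. $\tau_i$ is the composition of all $\tau_p$ with $\mathrm{rk}(p)=i$ (these commute). $\Phi_{\mathrm{row}(\sigma)}:=\tau_{\sigma(0)}\circ\tau_{\sigma(1)}\circ\cdots\circ\tau_{\sigma(r)}$. $\mathcal{T}^+_p(I)=1$ iff $p\notin I$ and $p$ minimal in $P\setminus I$; $\mathcal{T}^-_p(I)=1$ iff $p\in I$ and $p$ maximal in $I$ (else $0$). A distribution $\mu$ on $J(P)$ is toggle-symmetric if $\mathbb{E}(\mu;\mathcal{T}^+_p)=\mathbb{E}(\mu;\mathcal{T}^-_p)$ for all $p\in P$. *)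

theory Defs
  imports Complex_Main
begin

text \<open>A finite poset is modelled as a finite carrier set P inside a type of class order;
the order of the poset is the restriction of the ambient order to P.\<close>

definition covers :: "'a::order set \<Rightarrow> 'a \<Rightarrow> 'a \<Rightarrow> bool" where
  "covers P p q \<longleftrightarrow> p \<in> P \<and> q \<in> P \<and> p < q \<and> \<not> (\<exists>z\<in>P. p < z \<and> z < q)"

definition ranked :: "'a::order set \<Rightarrow> ('a \<Rightarrow> nat) \<Rightarrow> bool" where
  "ranked P rk \<longleftrightarrow> 0 \<in> rk ` P \<and> (\<forall>p q. covers P p q \<longrightarrow> rk q = rk p + 1)"

definition poset_connected :: "'a::order set \<Rightarrow> bool" where
  "poset_connected P \<longleftrightarrow>
     (\<forall>x\<in>P. \<forall>y\<in>P. (x, y) \<in> {(a, b). a \<in> P \<and> b \<in> P \<and> (a \<le> b \<or> b \<le> a)}\<^sup>*)"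

definition order_ideals :: "'a::order set \<Rightarrow> 'a set set" where
  "order_ideals P = {I. I \<subseteq> P \<and> (\<forall>x\<in>I. \<forall>y\<in>P. y \<le> x \<longrightarrow> y \<in> I)}"

definition minimal_in :: "'a::order \<Rightarrow> 'a set \<Rightarrow> bool" where
  "minimal_in p S \<longleftrightarrow> p \<in> S \<and> \<not> (\<exists>q\<in>S. q < p)"

definition maximal_in :: "'a::order \<Rightarrow> 'a set \<Rightarrow> bool" where
  "maximal_in p S \<longleftrightarrow> p \<in> S \<and> \<not> (\<exists>q\<in>S. p < q)"

definition toggle :: "'a::order set \<Rightarrow> 'a \<Rightarrow> 'a set \<Rightarrow> 'a set" where
  "toggle P p I =
     (if p \<notin> I \<and> minimal_in p (P - I) then insert p I
      else if p \<in> I \<and> maximal_in p I then I - {p}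
      else I)"

text \<open>\<tau>_i: composition of all toggles at elements of rank i (they commute).\<close>
definition rank_toggle :: "'a::order set \<Rightarrow> ('a \<Rightarrow> nat) \<Rightarrow> nat \<Rightarrow> 'a set \<Rightarrow> 'a set" where
  "rank_toggle P rk i = Finite_Set.fold (\<lambda>p f. toggle P p \<circ> f) id {p \<in> P. rk p = i}"

definition row_map :: "'a::order set \<Rightarrow> ('a \<Rightarrow> nat) \<Rightarrow> nat \<Rightarrow> (nat \<Rightarrow> nat) \<Rightarrow> 'a set \<Rightarrow> 'a set" where
  "row_map P rk r \<sigma> = foldr (\<lambda>i f. rank_toggle P rk (\<sigma> i) \<circ> f) [0..<Suc r] id"

definition orbit :: "('b \<Rightarrow> 'b) \<Rightarrow> 'b \<Rightarrow> 'b set" where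
  "orbit f x = {(f ^^ k) x | k. True}"

definition T_plus :: "'a::order set \<Rightarrow> 'a \<Rightarrow> 'a set \<Rightarrow> real" where
  "T_plus P p I = (if p \<notin> I \<and> minimal_in p (P - I) then 1 else 0)"

definition T_minus :: "'a::order set \<Rightarrow> 'a \<Rightarrow> 'a set \<Rightarrow> real" where
  "T_minus P p I = (if p \<in> I \<and> maximal_in p I then 1 else 0)"

definition expect :: "'a::order set \<Rightarrow> ('a set \<Rightarrow> real) \<Rightarrow> ('a set \<Rightarrow> real) \<Rightarrow> real" where
  "expect P \<mu> f = (\<Sum>I\<in>order_ideals P. \<mu> I * f I)"

definition toggle_symmetric :: "'a::order set \<Rightarrow> ('a set \<Rightarrow> real) \<Rightarrow> bool" where
  "toggle_symmetric P \<mu> \<longleftrightarrow> (\<forall>p\<in>P. expect P \<mu> (T_plus P p) = expect P \<mu> (T_minus P p))"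

definition uniform_on :: "'b set \<Rightarrow> 'b \<Rightarrow> real" where
  "uniform_on O' x = (if x \<in> O' then 1 / real (card O') else 0)"

end

theory Submission
  imports Defs
begin

definition tog :: "'a::order set \<Rightarrow> 'a \<Rightarrow> 'a set \<Rightarrow> bool" where
  "tog P x S \<longleftrightarrow> (x \<notin> S \<and> minimal_in x (P - S)) \<or> (x \<in> S \<and> maximal_in x S)"

lemma toggle_mem: "y \<in> toggle P x S \<longleftrightarrow> (if y = x then (y \<in> S) \<noteq> tog P x S else y \<in> S)"
  unfolding toggle_def tog_def by auto

lemma tog_cong:
  assumes "\<And>z. z = x \<or> z < x \<or> x < z \<Longrightarrow> (z \<in> S \<longleftrightarrow> z \<in> S')"
  shows "tog P x S = tog P x S'"
  using assms unfolding tog_def minimal_in_def maximal_in_def by blast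

lemma rank_less:
  assumes "finite P" "ranked P rk"
  shows "x \<in> P \<Longrightarrow> y \<in> P \<Longrightarrow> x < y \<Longrightarrow> rk x < rk y"
proof (induction "card {z\<in>P. x < z \<and> z < y}" arbitrary: y rule: less_induct)
  case less
  have "finite {z\<in>P. x \<le> z \<and> z < y}" using assms(1) by auto
  moreover have "x \<in> {z\<in>P. x \<le> z \<and> z < y}" using less by auto
  ultimately obtain c where c: "c \<in> {z\<in>P. x \<le> z \<and> z < y}" "x \<le> c"
    "\<forall>b\<in>{z\<in>P. x \<le> z \<and> z < y}. c \<le> b \<longrightarrow> c = b"
    using finite_has_maximal2 by blast
  have cov: "covers P c y"
    unfolding covers_def using c less.prems
    by (metis (no_types, lifting) dual_order.strict_trans1 mem_Collect_eq order_less_imp_le order_less_le)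
  hence ry: "rk y = rk c + 1" using assms(2) unfolding ranked_def by blast
  show ?case
  proof (cases "c = x")
    case True thus ?thesis using ry by simp
  next
    case False
    hence xc: "x < c" using c by auto
    have sub: "{z\<in>P. x < z \<and> z < c} \<subset> {z\<in>P. x < z \<and> z < y}"
      using c xc by auto
    have "card {z\<in>P. x < z \<and> z < c} < card {z\<in>P. x < z \<and> z < y}"
      using sub assms(1) by (simp add: psubset_card_mono)
    hence "rk x < rk c" using less.hyps[of c] less.prems c xc by auto
    thus ?thesis using ry by simp
  qed
qed

lemma same_rank_incomp:
  assumes "finite P" "ranked P rk" "x \<in> P" "y \<in> P" "rk x = rk y"
  shows "\<not> x < y"
  using rank_less[OF assms(1,2) assms(3,4)] assms(5) by auto

lemma toggle_comm:
  assumes "finite P" "ranked P rk" "x \<in> P" "y \<in> P" "rk x = rk y"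
  shows "toggle P x \<circ> toggle P y = toggle P y \<circ> toggle P x"
proof (cases "x = y")
  case True thus ?thesis by simp
next
  case False
  have nxy: "\<not> x < y" "\<not> y < x" using same_rank_incomp assms by metis+
  show ?thesis
  proof (rule ext)
    fix S
    have t1: "tog P x (toggle P y S) = tog P x S"
      by (rule tog_cong) (use False nxy in \<open>auto simp: toggle_mem\<close>)
    have t2: "tog P y (toggle P x S) = tog P y S"
      by (rule tog_cong) (use False nxy in \<open>auto simp: toggle_mem\<close>)
    show "(toggle P x \<circ> toggle P y) S = (toggle P y \<circ> toggle P x) S"
      using t1 t2 False by (auto simp: toggle_mem)
  qed
qed

definition rset :: "'a::order set \<Rightarrow> ('a \<Rightarrow> nat) \<Rightarrow> nat \<Rightarrow> 'a set" where
  "rset P rk m = {p \<in> P. rk p = m}"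

lemma cfc:
  assumes "finite P" "ranked P rk"
  shows "comp_fun_commute_on (rset P rk m) (\<lambda>p f. toggle P p \<circ> f)"
  unfolding comp_fun_commute_on_def rset_def
  using toggle_comm[OF assms] by (auto simp: fun_eq_iff o_def)

lemma fold_mem:
  assumes "finite P" "ranked P rk" "finite A" "A \<subseteq> rset P rk m"
  shows "z \<in> Finite_Set.fold (\<lambda>p f. toggle P p \<circ> f) id A S \<longleftrightarrow>
     (if z \<in> A then (z \<in> S) \<noteq> tog P z S else z \<in> S)"
  using assms(3,4)
proof (induction A arbitrary: z rule: finite_induct)
  case empty then show ?case by simp
next
  case (insert x A)
  have eq: "Finite_Set.fold (\<lambda>p f. toggle P p \<circ> f) id (insert x A) = 
     toggle P x \<circ> Finite_Set.fold (\<lambda>p f. toggle P p \<circ> f) id A"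
    using comp_fun_commute_on.fold_insert[OF cfc[OF assms(1,2)], of x A] insert by auto
  have IH: "\<And>z. z \<in> Finite_Set.fold (\<lambda>p f. toggle P p \<circ> f) id A S \<longleftrightarrow>
     (if z \<in> A then (z \<in> S) \<noteq> tog P z S else z \<in> S)" using insert.IH insert.prems by blast
  have xP: "x \<in> P" "\<forall>a\<in>A. a \<in> P \<and> rk a = rk x" using insert.prems by (auto simp: rset_def)
  have inc: "\<forall>a\<in>A. \<not> a < x \<and> \<not> x < a" using same_rank_incomp[OF assms(1,2)] xP
    by metis
  have t: "tog P x (Finite_Set.fold (\<lambda>p f. toggle P p \<circ> f) id A S) = tog P x S"
    by (rule tog_cong) (use IH inc insert.hyps in \<open>auto\<close>)
  have "z \<in> toggle P x (Finite_Set.fold (\<lambda>p f. toggle P p \<circ> f) id A S) \<longleftrightarrow>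
     (if z \<in> insert x A then (z \<in> S) \<noteq> tog P z S else z \<in> S)"
    unfolding toggle_mem t using IH[of z] IH[of x] insert.hyps by auto
  thus ?case unfolding eq by simp
qed

lemma rank_toggle_mem:
  assumes "finite P" "ranked P rk"
  shows "z \<in> rank_toggle P rk m S \<longleftrightarrow>
     (if z \<in> P \<and> rk z = m then (z \<in> S) \<noteq> tog P z S else z \<in> S)"
  unfolding rank_toggle_def using fold_mem[OF assms, of "rset P rk m" m z S] assms(1)
  by (simp add: rset_def)

lemma toggle_ideal:
  assumes S: "S \<in> order_ideals P" and x: "x \<in> P"
  shows "toggle P x S \<in> order_ideals P"
proof -
  have S1: "S \<subseteq> P" "\<And>a b. a \<in> S \<Longrightarrow> b \<in> P \<Longrightarrow> b \<le> a \<Longrightarrow> b \<in> S"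
    using S unfolding order_ideals_def by auto
  consider (add) "x \<notin> S" "minimal_in x (P - S)" | (rem) "x \<in> S" "maximal_in x S" "\<not> (x \<notin> S \<and> minimal_in x (P - S))"
    | (none) "toggle P x S = S"
    unfolding toggle_def by (cases "x \<notin> S \<and> minimal_in x (P - S)"; cases "x \<in> S \<and> maximal_in x S") auto
  then show ?thesis
  proof cases
    case add
    hence t: "toggle P x S = insert x S" unfolding toggle_def by simp
    have lt: "\<And>b. b \<in> P \<Longrightarrow> b < x \<Longrightarrow> b \<in> S" using add(2) unfolding minimal_in_def by auto
    have "\<forall>a\<in>insert x S. \<forall>b\<in>P. b \<le> a \<longrightarrow> b \<in> insert x S"
    proof (intro ballI impI)
      fix a b assume "a \<in> insert x S" "b \<in> P" "b \<le> a"
      show "b \<in> insert x S"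
      proof (cases "a = x")
        case True
        then show ?thesis using lt \<open>b \<in> P\<close> \<open>b \<le> a\<close> by (cases "b = x") (auto simp: order_less_le)
      next
        case False
        then show ?thesis using S1(2) \<open>a \<in> insert x S\<close> \<open>b \<in> P\<close> \<open>b \<le> a\<close> by blast
      qed
    qed
    moreover have "insert x S \<subseteq> P" using S1 x by blast
    ultimately show ?thesis unfolding t order_ideals_def by (simp only: mem_Collect_eq)
  next
    case rem
    hence t: "toggle P x S = S - {x}" unfolding toggle_def by simp
    have nb: "\<And>b. b \<in> S \<Longrightarrow> \<not> x < b" using rem(2) unfolding maximal_in_def by auto
    have "\<forall>a\<in>S - {x}. \<forall>b\<in>P. b \<le> a \<longrightarrow> b \<in> S - {x}"
    proof (intro ballI impI)
      fix a b
      assume ab: "a \<in> S - {x}" "b \<in> P" "b \<le> a"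
      have "b \<in> S" using S1(2) ab by blast
      moreover have "b \<noteq> x"
      proof
        assume "b = x"
        then have "x < a" using ab by (auto simp: order_less_le)
        then show False using nb ab by blast
      qed
      ultimately show "b \<in> S - {x}" by blast
    qed
    moreover have "S - {x} \<subseteq> P" using S1 by blast
    ultimately show ?thesis unfolding t order_ideals_def by (simp only: mem_Collect_eq)
  next
    case none then show ?thesis using S by simp
  qed
qed

lemma toggle_invol:
  assumes S: "S \<in> order_ideals P" and x: "x \<in> P"
  shows "toggle P x (toggle P x S) = S"
proof -
  have S1: "S \<subseteq> P" "\<And>a b. a \<in> S \<Longrightarrow> b \<in> P \<Longrightarrow> b \<le> a \<Longrightarrow> b \<in> S"
    using S unfolding order_ideals_def by auto
  consider (add) "x \<notin> S" "minimal_in x (P - S)" | (rem) "x \<in> S" "maximal_in x S" 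
    | (none) "toggle P x S = S"
    unfolding toggle_def by (cases "x \<notin> S \<and> minimal_in x (P - S)"; cases "x \<in> S \<and> maximal_in x S") auto
  then show ?thesis
  proof cases
    case add
    hence t: "toggle P x S = insert x S" unfolding toggle_def by simp
    have "\<not> (\<exists>q\<in>insert x S. x < q)"
      using add(1) S1 x order_less_imp_le by blast
    hence "maximal_in x (insert x S)" unfolding maximal_in_def by simp
    then show ?thesis unfolding t using add(1) by (simp add: toggle_def)
  next
    case rem
    hence t: "toggle P x S = S - {x}" unfolding toggle_def by simp
    have "\<not> (\<exists>q\<in>P - (S - {x}). q < x)"
      using rem(1) S1 x order_less_imp_le by blast
    hence "minimal_in x (P - (S - {x}))" unfolding minimal_in_def using x by simp
    then show ?thesis unfolding t using rem(1) by (auto simp add: toggle_def insert_absorb)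
  next
    case none then show ?thesis by simp
  qed
qed

lemma fold_ideal:
  assumes "finite P" "ranked P rk" "finite A" "A \<subseteq> rset P rk m"
  shows "(\<forall>S\<in>order_ideals P. Finite_Set.fold (\<lambda>p f. toggle P p \<circ> f) id A S \<in> order_ideals P)
     \<and> inj_on (Finite_Set.fold (\<lambda>p f. toggle P p \<circ> f) id A) (order_ideals P)"
  using assms(3,4)
proof (induction A rule: finite_induct)
  case empty then show ?case by simp
next
  case (insert x A)
  have eq: "Finite_Set.fold (\<lambda>p f. toggle P p \<circ> f) id (insert x A) = 
     toggle P x \<circ> Finite_Set.fold (\<lambda>p f. toggle P p \<circ> f) id A"
    using comp_fun_commute_on.fold_insert[OF cfc[OF assms(1,2)], of x A] insert by auto
  have xP: "x \<in> P" using insert.prems by (auto simp: rset_def)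
  have IH: "(\<forall>S\<in>order_ideals P. Finite_Set.fold (\<lambda>p f. toggle P p \<circ> f) id A S \<in> order_ideals P)
     \<and> inj_on (Finite_Set.fold (\<lambda>p f. toggle P p \<circ> f) id A) (order_ideals P)"
    using insert.IH insert.prems by blast
  have inj: "inj_on (toggle P x) (order_ideals P)"
  proof (rule inj_onI)
    fix a b assume "a \<in> order_ideals P" "b \<in> order_ideals P" "toggle P x a = toggle P x b"
    then show "a = b" using toggle_invol[OF _ xP] by metis
  qed
  have img: "Finite_Set.fold (\<lambda>p f. toggle P p \<circ> f) id A ` order_ideals P \<subseteq> order_ideals P"
    using IH by blast
  have "inj_on (toggle P x \<circ> Finite_Set.fold (\<lambda>p f. toggle P p \<circ> f) id A) (order_ideals P)"
    using comp_inj_on[of _ "order_ideals P" "toggle P x"] IH inj inj_on_subset[OF inj img] by blast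
  moreover have "\<forall>S\<in>order_ideals P. (toggle P x \<circ> Finite_Set.fold (\<lambda>p f. toggle P p \<circ> f) id A) S \<in> order_ideals P"
    using IH toggle_ideal[OF _ xP] by simp
  ultimately show ?case unfolding eq by blast
qed

lemma rank_toggle_ideal:
  assumes "finite P" "ranked P rk"
  shows "\<forall>S\<in>order_ideals P. rank_toggle P rk m S \<in> order_ideals P"
    "inj_on (rank_toggle P rk m) (order_ideals P)"
  unfolding rank_toggle_def using fold_ideal[OF assms, of "rset P rk m" m] assms(1)
  by (auto simp: rset_def)

definition G :: "'a::order set \<Rightarrow> ('a \<Rightarrow> nat) \<Rightarrow> (nat \<Rightarrow> nat) \<Rightarrow> nat list \<Rightarrow> 'a set \<Rightarrow> 'a set" where
  "G P rk \<sigma> ms = foldr (\<lambda>i f. rank_toggle P rk (\<sigma> i) \<circ> f) ms id"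

lemma foldr_comp_id: "foldr (\<lambda>i f. h i \<circ> f) xs g = foldr (\<lambda>i f. h i \<circ> f) xs id \<circ> g"
  by (induction xs) (auto simp: o_assoc)
lemma G_append: "G P rk \<sigma> (xs @ ys) = G P rk \<sigma> xs \<circ> G P rk \<sigma> ys"
  unfolding G_def foldr_append by (rule foldr_comp_id)

lemma G_Cons: "G P rk \<sigma> (x # ys) = rank_toggle P rk (\<sigma> x) \<circ> G P rk \<sigma> ys"
  unfolding G_def by simp


lemma G_ideal:
  assumes "finite P" "ranked P rk"
  shows "(\<forall>S\<in>order_ideals P. G P rk \<sigma> ms S \<in> order_ideals P) \<and> inj_on (G P rk \<sigma> ms) (order_ideals P)"
proof (induction ms)
  case Nil then show ?case by (simp add: G_def)
next
  case (Cons a ms)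
  have img: "G P rk \<sigma> ms ` order_ideals P \<subseteq> order_ideals P" using Cons by blast
  have "inj_on (rank_toggle P rk (\<sigma> a) \<circ> G P rk \<sigma> ms) (order_ideals P)"
    using comp_inj_on[of "G P rk \<sigma> ms" "order_ideals P" "rank_toggle P rk (\<sigma> a)"] Cons
      inj_on_subset[OF rank_toggle_ideal(2)[OF assms] img] by blast
  moreover have "\<forall>S\<in>order_ideals P. (rank_toggle P rk (\<sigma> a) \<circ> G P rk \<sigma> ms) S \<in> order_ideals P"
    using Cons rank_toggle_ideal(1)[OF assms] by simp
  ultimately show ?case unfolding G_Cons by blast
qed

lemma G_mem:
  assumes "finite P" "ranked P rk" "\<forall>m\<in>set ms. z \<notin> P \<or> rk z \<noteq> \<sigma> m"
  shows "z \<in> G P rk \<sigma> ms S \<longleftrightarrow> z \<in> S"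
  using assms(3)
proof (induction ms)
  case Nil then show ?case by (simp add: G_def)
next
  case (Cons a ms)
  then show ?case unfolding G_Cons using rank_toggle_mem[OF assms(1,2)] by auto
qed

lemma row_map_G: "row_map P rk r \<sigma> = G P rk \<sigma> [0..<Suc r]"
  unfolding row_map_def G_def by simp


lemma Tp_char:
  assumes "finite P" "K \<in> order_ideals P" "p \<in> P"
  shows "T_plus P p K = (if p \<notin> K \<and> (\<forall>c. covers P c p \<longrightarrow> c \<in> K) then 1 else 0)"
proof -
  have K: "K \<subseteq> P" "\<And>a b. a \<in> K \<Longrightarrow> b \<in> P \<Longrightarrow> b \<le> a \<Longrightarrow> b \<in> K"
    using assms(2) unfolding order_ideals_def by auto
  have "minimal_in p (P - K) \<longleftrightarrow> p \<notin> K \<and> (\<forall>c. covers P c p \<longrightarrow> c \<in> K)" if "p \<notin> K"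
  proof
    assume "minimal_in p (P - K)"
    then show "p \<notin> K \<and> (\<forall>c. covers P c p \<longrightarrow> c \<in> K)"
      unfolding minimal_in_def covers_def using that by blast
  next
    assume h: "p \<notin> K \<and> (\<forall>c. covers P c p \<longrightarrow> c \<in> K)"
    have "\<not> (\<exists>q\<in>P - K. q < p)"
    proof
      assume "\<exists>q\<in>P - K. q < p"
      then obtain q where q: "q \<in> P" "q \<notin> K" "q < p" by blast
      have "finite {z\<in>P. q \<le> z \<and> z < p}" using assms(1) by auto
      moreover have "q \<in> {z\<in>P. q \<le> z \<and> z < p}" using q by auto
      ultimately obtain c where c: "c \<in> {z\<in>P. q \<le> z \<and> z < p}" "q \<le> c"
        "\<forall>b\<in>{z\<in>P. q \<le> z \<and> z < p}. c \<le> b \<longrightarrow> c = b"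
        using finite_has_maximal2 by blast
      have "covers P c p"
        unfolding covers_def
      proof (intro conjI)
        show "\<not> (\<exists>z\<in>P. c < z \<and> z < p)"
        proof
          assume "\<exists>z\<in>P. c < z \<and> z < p"
          then obtain z where z: "z \<in> P" "c < z" "z < p" by blast
          then have "z \<in> {z\<in>P. q \<le> z \<and> z < p}" using c(2) by auto
          then show False using c(3) z(2) by (auto simp: order_less_le)
        qed
      qed (use c assms(3) in auto)
      then have "c \<in> K" using h by blast
      then have "q \<in> K" using K(2) c q by blast
      then show False using q by blast
    qed
    then show "minimal_in p (P - K)" unfolding minimal_in_def using h assms(3) by blast
  qed
  then show ?thesis unfolding T_plus_def by auto
qed

lemma Tm_char:
  assumes "finite P" "K \<in> order_ideals P" "p \<in> P"
  shows "T_minus P p K = (if p \<in> K \<and> (\<forall>c. covers P p c \<longrightarrow> c \<notin> K) then 1 else 0)"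
proof -
  have K: "K \<subseteq> P" "\<And>a b. a \<in> K \<Longrightarrow> b \<in> P \<Longrightarrow> b \<le> a \<Longrightarrow> b \<in> K"
    using assms(2) unfolding order_ideals_def by auto
  have "maximal_in p K \<longleftrightarrow> p \<in> K \<and> (\<forall>c. covers P p c \<longrightarrow> c \<notin> K)" if "p \<in> K"
  proof
    assume "maximal_in p K"
    then show "p \<in> K \<and> (\<forall>c. covers P p c \<longrightarrow> c \<notin> K)"
      unfolding maximal_in_def covers_def using that by blast
  next
    assume h: "p \<in> K \<and> (\<forall>c. covers P p c \<longrightarrow> c \<notin> K)"
    have "\<not> (\<exists>q\<in>K. p < q)"
    proof
      assume "\<exists>q\<in>K. p < q"
      then obtain q where q: "q \<in> P" "q \<in> K" "p < q" using K(1) by blast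
      have "finite {z\<in>P. p < z \<and> z \<le> q}" using assms(1) by auto
      moreover have "q \<in> {z\<in>P. p < z \<and> z \<le> q}" using q by auto
      ultimately obtain c where c: "c \<in> {z\<in>P. p < z \<and> z \<le> q}" "c \<le> q"
        "\<forall>b\<in>{z\<in>P. p < z \<and> z \<le> q}. b \<le> c \<longrightarrow> c = b"
        using finite_has_minimal2 by blast
      have "covers P p c"
        unfolding covers_def
      proof (intro conjI)
        show "\<not> (\<exists>z\<in>P. p < z \<and> z < c)"
        proof
          assume "\<exists>z\<in>P. p < z \<and> z < c"
          then obtain z where z: "z \<in> P" "p < z" "z < c" by blast
          then have "z \<in> {z\<in>P. p < z \<and> z \<le> q}" using c by auto
          then show False using c(3) z(3) by (auto simp: order_less_le)
        qed
      qed (use c assms(3) in auto)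
      then have "c \<notin> K" using h by blast
      moreover have "c \<in> K" using K(2) c q by blast
      ultimately show False by blast
    qed
    then show "maximal_in p K" unfolding maximal_in_def using h by blast
  qed
  then show ?thesis unfolding T_minus_def by auto
qed



lemma main_sum:
  fixes P :: "'a::order set" and rk :: "'a \<Rightarrow> nat" and \<sigma> :: "nat \<Rightarrow> nat"
  assumes fin: "finite P" and rkd: "ranked P rk" and rdef: "r = Max (rk ` P)"
    and bij: "bij_betw \<sigma> {0..r} {0..r}"
    and OId: "O' \<subseteq> order_ideals P" and finO: "finite O'"
    and reidx: "\<And>f :: 'a set \<Rightarrow> real. (\<Sum>K\<in>O'. f (G P rk \<sigma> [0..<Suc r] K)) = (\<Sum>K\<in>O'. f K)"
    and pP: "p \<in> P"
  shows "(\<Sum>K\<in>O'. T_plus P p K) = (\<Sum>K\<in>O'. T_minus P p K)"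
proof -
  define i where "i = rk p"
  have ir: "i \<le> r" unfolding i_def rdef using fin pP by simp
  obtain j where j: "j \<in> {0..r}" "\<sigma> j = i" using bij ir unfolding bij_betw_def
    by (metis atLeastAtMost_iff imageE le0)
  have inj: "inj_on \<sigma> {0..r}" using bij bij_betw_def by blast
  define Al where "Al = [0..<j]"
  define Bl where "Bl = [Suc j..<Suc r]"
  have split: "[0..<Suc r] = Al @ j # Bl" unfolding Al_def Bl_def
  proof -
    have "[0..<Suc r] = [0..<j] @ [j..<j + (Suc r - j)]"
      using upt_add_eq_append[of 0 j "Suc r - j"] j by simp
    also have "\<dots> = [0..<j] @ j # [Suc j..<Suc r]" using j upt_conv_Cons[of j "Suc r"] by simp
    finally show "[0..<Suc r] = [0..<j] @ j # [Suc j..<Suc r]" .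
  qed
  define A where "A = G P rk \<sigma> Al"
  define B where "B = G P rk \<sigma> Bl"
  define \<tau> where "\<tau> = rank_toggle P rk i"
  have Phi: "G P rk \<sigma> [0..<Suc r] = A \<circ> \<tau> \<circ> B"
    unfolding split A_def B_def \<tau>_def G_append G_Cons j(2) by (simp add: o_assoc)
  have setA: "\<And>m. m \<in> set Al \<Longrightarrow> m \<in> {0..r} \<and> m < j" unfolding Al_def using j by auto
  have setB: "\<And>m. m \<in> set Bl \<Longrightarrow> m \<in> {0..r} \<and> j < m" unfolding Bl_def by auto
  have pA: "\<forall>m\<in>set Al. p \<notin> P \<or> rk p \<noteq> \<sigma> m"
    using setA inj j unfolding i_def by (metis inj_on_contraD less_irrefl)
  have pB: "\<forall>m\<in>set Bl. p \<notin> P \<or> rk p \<noteq> \<sigma> m"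
    using setB inj j unfolding i_def by (metis inj_on_contraD less_irrefl)
  define Lc where "Lc = {c. covers P c p}"
  define Uc where "Uc = {c. covers P p c}"
  have Lrk: "\<And>c. c \<in> Lc \<Longrightarrow> c \<in> P \<and> rk c + 1 = i \<and> c < p"
    unfolding Lc_def i_def using rkd unfolding ranked_def covers_def by auto
  have Urk: "\<And>c. c \<in> Uc \<Longrightarrow> c \<in> P \<and> rk c = i + 1 \<and> p < c"
    unfolding Uc_def i_def using rkd unfolding ranked_def covers_def by auto
  have Lav: "(\<forall>m\<in>set Bl. \<forall>c\<in>Lc. rk c \<noteq> \<sigma> m) \<or> (\<forall>m\<in>set Al. \<forall>c\<in>Lc. rk c \<noteq> \<sigma> m)"
  proof (rule ccontr)
    assume "\<not> ?thesis"
    then obtain m c m' c' where "m \<in> set Bl" "c \<in> Lc" "rk c = \<sigma> m" "m' \<in> set Al" "c' \<in> Lc" "rk c' = \<sigma> m'"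
      by blast
    then show False using Lrk setA setB inj unfolding inj_on_def
      by (metis add_right_cancel less_asym order.strict_trans)
  qed
  have Uav: "(\<forall>m\<in>set Bl. \<forall>c\<in>Uc. rk c \<noteq> \<sigma> m) \<or> (\<forall>m\<in>set Al. \<forall>c\<in>Uc. rk c \<noteq> \<sigma> m)"
  proof (rule ccontr)
    assume "\<not> ?thesis"
    then obtain m c m' c' where "m \<in> set Bl" "c \<in> Uc" "rk c = \<sigma> m" "m' \<in> set Al" "c' \<in> Uc" "rk c' = \<sigma> m'"
      by blast
    then show False using Urk setA setB inj unfolding inj_on_def
      by (metis less_asym order.strict_trans)
  qed
  define tp where "tp X \<longleftrightarrow> p \<notin> X \<and> Lc \<subseteq> X" for X :: "'a set"
  define tm where "tm X \<longleftrightarrow> p \<in> X \<and> Uc \<inter> X = {}" for X :: "'a set"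
  have Tp: "T_plus P p X = (if tp X then 1 else 0)" if "X \<in> order_ideals P" for X
    using Tp_char[OF fin that pP] unfolding tp_def Lc_def by auto
  have Tm: "T_minus P p X = (if tm X then 1 else 0)" if "X \<in> order_ideals P" for X
    using Tm_char[OF fin that pP] unfolding tm_def Uc_def by auto
  have togc: "tog P p X \<longleftrightarrow> tp X \<or> tm X" if "X \<in> order_ideals P" for X
    using Tp[OF that] Tm[OF that] unfolding tog_def T_plus_def T_minus_def
    by (smt (verit))
  have idl: "\<And>X. X \<in> order_ideals P \<Longrightarrow> p \<in> X \<Longrightarrow> Lc \<subseteq> X"
    using Lrk pP unfolding order_ideals_def by (auto simp: order_less_le)
  have idu: "\<And>X. X \<in> order_ideals P \<Longrightarrow> p \<notin> X \<Longrightarrow> Uc \<inter> X = {}"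
    using Urk pP unfolding order_ideals_def by (auto simp: order_less_le)
  have Bid: "\<And>X. X \<in> order_ideals P \<Longrightarrow> B X \<in> order_ideals P"
    using G_ideal[OF fin rkd] unfolding B_def by blast
  have tid: "\<And>X. X \<in> order_ideals P \<Longrightarrow> \<tau> X \<in> order_ideals P"
    using rank_toggle_ideal[OF fin rkd] unfolding \<tau>_def by blast
  have tmem: "z \<in> \<tau> X \<longleftrightarrow> (if z = p then (p \<in> X) \<noteq> tog P p X else z \<in> X)" if "z \<in> {p} \<union> Lc \<union> Uc" for z X
  proof -
    have zz: "z = p \<or> z \<in> Lc \<or> z \<in> Uc" using that by blast
    have "z \<in> P" using zz pP Lrk Urk by blast
    moreover have "z = p \<or> rk z \<noteq> i"
    proof (cases "z = p")
      case False
      then have "z \<in> Lc \<or> z \<in> Uc" using zz by blast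
      then show ?thesis
      proof
        assume "z \<in> Lc" then have "rk z + 1 = i" using Lrk by blast
        then show ?thesis by simp
      next
        assume "z \<in> Uc" then have "rk z = i + 1" using Urk by blast
        then show ?thesis by simp
      qed
    qed simp
    ultimately show ?thesis using rank_toggle_mem[OF fin rkd, of z i X] unfolding \<tau>_def i_def by auto
  qed
  have Kid: "\<And>K. K \<in> O' \<Longrightarrow> K \<in> order_ideals P" using OId by blast
  have PhiK: "G P rk \<sigma> [0..<Suc r] K = A (\<tau> (B K))" for K using Phi by simp
  have pBm: "p \<in> B X \<longleftrightarrow> p \<in> X" for X unfolding B_def using G_mem[OF fin rkd pB] .
  have pAm: "p \<in> A X \<longleftrightarrow> p \<in> X" for X unfolding A_def using G_mem[OF fin rkd pA] .
  have tsw: "tp (\<tau> X) = tm X \<and> tm (\<tau> X) = tp X" if X: "X \<in> order_ideals P" for X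
  proof -
    have L1: "c \<in> \<tau> X \<longleftrightarrow> c \<in> X" if "c \<in> Lc" for c
    proof -
      have "c \<noteq> p" using Lrk[OF that] by auto
      then show ?thesis using tmem[of c X] that by simp
    qed
    have U1: "c \<in> \<tau> X \<longleftrightarrow> c \<in> X" if "c \<in> Uc" for c
    proof -
      have "c \<noteq> p" using Urk[OF that] by auto
      then show ?thesis using tmem[of c X] that by simp
    qed
    have L: "Lc \<subseteq> \<tau> X \<longleftrightarrow> Lc \<subseteq> X" using L1 by blast
    have U: "Uc \<inter> \<tau> X = {} \<longleftrightarrow> Uc \<inter> X = {}" using U1 by blast
    have pt: "p \<in> \<tau> X \<longleftrightarrow> (p \<in> X) \<noteq> (tp X \<or> tm X)" using tmem[of p X] togc[OF X] by simp
    show ?thesis using L U pt idl[OF X] idu[OF X] unfolding tp_def tm_def by blast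
  qed
  define a where "a = (\<Sum>K\<in>O'. T_plus P p (B K))"
  define b where "b = (\<Sum>K\<in>O'. T_minus P p (B K))"
  define \<chi> where "\<chi> X = (if p \<in> X then 1 else (0::real))" for X
  have chi: "\<chi> (\<tau> (B K)) - \<chi> (B K) = T_plus P p (B K) - T_minus P p (B K)" if "K \<in> O'" for K
  proof -
    have X: "B K \<in> order_ideals P" using Bid Kid that by blast
    have pt: "p \<in> \<tau> (B K) \<longleftrightarrow> (p \<in> B K) \<noteq> (tp (B K) \<or> tm (B K))" using tmem[of p "B K"] togc[OF X] by simp
    show ?thesis unfolding \<chi>_def Tp[OF X] Tm[OF X] using pt unfolding tp_def tm_def by auto
  qed
  have "a - b = (\<Sum>K\<in>O'. \<chi> (\<tau> (B K)) - \<chi> (B K))"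
    unfolding a_def b_def using chi by (simp add: sum_subtractf)
  also have "\<dots> = (\<Sum>K\<in>O'. \<chi> (G P rk \<sigma> [0..<Suc r] K)) - (\<Sum>K\<in>O'. \<chi> K)"
    unfolding sum_subtractf PhiK \<chi>_def using pAm pBm by simp
  also have "\<dots> = 0" using reidx[of \<chi>] by simp
  finally have ab: "a = b" by simp
  have plus: "(\<Sum>K\<in>O'. T_plus P p K) = a \<or> (\<Sum>K\<in>O'. T_plus P p K) = b"
    using Lav
  proof
    assume av: "\<forall>m\<in>set Bl. \<forall>c\<in>Lc. rk c \<noteq> \<sigma> m"
    have "T_plus P p K = T_plus P p (B K)" if "K \<in> O'" for K
    proof -
      have "Lc \<subseteq> B K \<longleftrightarrow> Lc \<subseteq> K" using av G_mem[OF fin rkd] unfolding B_def by blast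
      then show ?thesis using Tp Kid[OF that] Bid pBm unfolding tp_def by simp
    qed
    then show ?thesis unfolding a_def by simp
  next
    assume av: "\<forall>m\<in>set Al. \<forall>c\<in>Lc. rk c \<noteq> \<sigma> m"
    have "T_plus P p (G P rk \<sigma> [0..<Suc r] K) = T_minus P p (B K)" if "K \<in> O'" for K
    proof -
      have X: "B K \<in> order_ideals P" using Bid Kid that by blast
      have X': "A (\<tau> (B K)) \<in> order_ideals P" using G_ideal[OF fin rkd] X tid unfolding A_def by blast
      have "Lc \<subseteq> A (\<tau> (B K)) \<longleftrightarrow> Lc \<subseteq> \<tau> (B K)" using av G_mem[OF fin rkd] unfolding A_def by blast
      then have "tp (A (\<tau> (B K))) = tp (\<tau> (B K))" using pAm unfolding tp_def by simp
      then show ?thesis unfolding PhiK Tp[OF X'] Tm[OF X] using tsw[OF X] by simp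
    qed
    then have "(\<Sum>K\<in>O'. T_plus P p (G P rk \<sigma> [0..<Suc r] K)) = b" unfolding b_def by simp
    then show ?thesis using reidx[of "T_plus P p"] by simp
  qed
  have minus: "(\<Sum>K\<in>O'. T_minus P p K) = a \<or> (\<Sum>K\<in>O'. T_minus P p K) = b"
    using Uav
  proof
    assume av: "\<forall>m\<in>set Bl. \<forall>c\<in>Uc. rk c \<noteq> \<sigma> m"
    have "T_minus P p K = T_minus P p (B K)" if "K \<in> O'" for K
    proof -
      have "Uc \<inter> B K = {} \<longleftrightarrow> Uc \<inter> K = {}" using av G_mem[OF fin rkd] unfolding B_def by blast
      then show ?thesis using Tm Kid[OF that] Bid pBm unfolding tm_def by simp
    qed
    then show ?thesis unfolding b_def by simp
  next
    assume av: "\<forall>m\<in>set Al. \<forall>c\<in>Uc. rk c \<noteq> \<sigma> m"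
    have "T_minus P p (G P rk \<sigma> [0..<Suc r] K) = T_plus P p (B K)" if "K \<in> O'" for K
    proof -
      have X: "B K \<in> order_ideals P" using Bid Kid that by blast
      have X': "A (\<tau> (B K)) \<in> order_ideals P" using G_ideal[OF fin rkd] X tid unfolding A_def by blast
      have "Uc \<inter> A (\<tau> (B K)) = {} \<longleftrightarrow> Uc \<inter> \<tau> (B K) = {}" using av G_mem[OF fin rkd] unfolding A_def by blast
      then have "tm (A (\<tau> (B K))) = tm (\<tau> (B K))" using pAm unfolding tm_def by simp
      then show ?thesis unfolding PhiK Tm[OF X'] Tp[OF X] using tsw[OF X] by simp
    qed
    then have "(\<Sum>K\<in>O'. T_minus P p (G P rk \<sigma> [0..<Suc r] K)) = a" unfolding a_def by simp
    then show ?thesis using reidx[of "T_minus P p"] by simp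
  qed
  show ?thesis using plus minus ab by auto
qed

theorem lemma8p5:
  fixes P :: "'a::order set" and rk :: "'a \<Rightarrow> nat" and \<sigma> :: "nat \<Rightarrow> nat"
    and r :: nat and I :: "'a set"
  assumes "finite P"
    and "poset_connected P"
    and "ranked P rk"
    and "r = Max (rk ` P)"
    and "bij_betw \<sigma> {0..r} {0..r}"
    and "I \<in> order_ideals P"
  shows "toggle_symmetric P (uniform_on (orbit (row_map P rk r \<sigma>) I))"
proof -
  note fin = assms(1) and rkd = assms(3)
  define \<Phi> where "\<Phi> = row_map P rk r \<sigma>"
  define O' where "O' = orbit \<Phi> I"
  define Id where "Id = order_ideals P"
  have "Id \<subseteq> Pow P" unfolding Id_def order_ideals_def by blast
  then have finId: "finite Id" using fin finite_subset by blast
  have PhiG: "\<Phi> = G P rk \<sigma> [0..<Suc r]" unfolding \<Phi>_def by (rule row_map_G)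
  have Phi_id: "\<And>S. S \<in> Id \<Longrightarrow> \<Phi> S \<in> Id" and Phi_inj: "inj_on \<Phi> Id"
    using G_ideal[OF fin rkd, of \<sigma> "[0..<Suc r]"] unfolding PhiG Id_def by blast+
  have pow: "(\<Phi> ^^ k) I \<in> Id" for k
    by (induction k) (use assms(6) Phi_id Id_def in auto)
  have OId: "O' \<subseteq> Id" unfolding O'_def orbit_def using pow by blast
  have finO: "finite O'" using OId finId finite_subset by blast
  have img: "\<Phi> ` O' \<subseteq> O'"
  proof
    fix y assume "y \<in> \<Phi> ` O'"
    then obtain k where "y = \<Phi> ((\<Phi> ^^ k) I)" unfolding O'_def orbit_def by blast
    then have "y = (\<Phi> ^^ Suc k) I" by simp
    then show "y \<in> O'" unfolding O'_def orbit_def by blast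
  qed
  have injO: "inj_on \<Phi> O'" using inj_on_subset[OF Phi_inj OId] .
  have reidx: "(\<Sum>K\<in>O'. f (\<Phi> K)) = (\<Sum>K\<in>O'. f K)" for f :: "'a set \<Rightarrow> real"
  proof -
    have "(\<Sum>K\<in>O'. f K) = (\<Sum>K\<in>\<Phi> ` O'. f K)" using endo_inj_surj[OF finO img injO] by simp
    also have "\<dots> = (\<Sum>K\<in>O'. f (\<Phi> K))" using sum.reindex[OF injO] by simp
    finally show ?thesis by simp
  qed
  have main: "(\<Sum>K\<in>O'. T_plus P p K) = (\<Sum>K\<in>O'. T_minus P p K)" if pP: "p \<in> P" for p
  proof -
    have reG: "\<And>f :: 'a set \<Rightarrow> real. (\<Sum>K\<in>O'. f (G P rk \<sigma> [0..<Suc r] K)) = (\<Sum>K\<in>O'. f K)"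
      using reidx unfolding PhiG .
    have OI: "O' \<subseteq> order_ideals P" using OId unfolding Id_def .
    show ?thesis using main_sum[OF fin rkd assms(4) assms(5) OI finO reG pP] .
  qed
  show ?thesis
    unfolding toggle_symmetric_def
  proof
    fix p assume pP: "p \<in> P"
    have ex: "expect P (uniform_on O') f = (1 / real (card O')) * (\<Sum>K\<in>O'. f K)" for f
    proof -
      have "expect P (uniform_on O') f = (\<Sum>K\<in>O'. uniform_on O' K * f K)"
        unfolding expect_def
      proof (rule sum.mono_neutral_left[symmetric])
        show "finite (order_ideals P)" using finId unfolding Id_def .
        show "O' \<subseteq> order_ideals P" using OId unfolding Id_def .
      qed (simp add: uniform_on_def)
      also have "\<dots> = (\<Sum>K\<in>O'. (1 / real (card O')) * f K)"
        unfolding uniform_on_def by simp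
      finally show ?thesis by (simp add: sum_distrib_left)
    qed
    show "expect P (uniform_on (orbit (row_map P rk r \<sigma>) I)) (T_plus P p) =
      expect P (uniform_on (orbit (row_map P rk r \<sigma>) I)) (T_minus P p)"
      using ex[of "T_plus P p"] ex[of "T_minus P p"] main[OF pP]
      unfolding O'_def \<Phi>_def by simp
  qed
qed
end
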